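(* Let $r\ge1$ and let $f(z_1,\dots,z_r)=\sum_{\ell_1,\dots,\ell_r\ge0}a_{\ell_1,\dots,\ell_r}z_1^{\ell_1}\cdots z_r^{\ell_r}$ be a power series converging on the open polydisk $\{|z_l|<R_l,\ l=1,\dots,r\}$. For $l=1,\dots,r$ let $X_l\in\mathbb{C}^{m\times m}$ have Jordan data (as in the context) with: - distinct eigenvalues $\lambda^{(l)}_1,\dots,\lambda^{(l)}_{K_l}$ satisfying $|\lambda^{(l)}_k|<R_l$; - geometric multiplicities $\alpha^{(G)}_{l,k}$ and block sizes $m^{(l)}_{k,i}$; - projectors $P^{(l)}_{k,i}$ and nilpotents $N^{(l)}_{k,i}$. Define $f(X_1,\dots,X_r)=\sum a_{\ell_1,\dots,\ell_r}X_1^{\ell_1}X_2^{\ell_2}\cdots X_r^{\ell_r}$. Then this series converges, and $$f(X_1,\dots,X_r)=\sum_{k_1,\dots,k_r}\ \sum_{i_1,\dots,i_r}\ \sum_{q_1=0}^{m^{(1)}_{k_1,i_1}-1}\cdots\sum_{q_r=0}^{m^{(r)}_{k_r,i_r}-1}\frac{\partial_{z_1}^{q_1}\cdots\partial_{z_r}^{q_r}f(\lambda^{(1)}_{k_1},\dots,\lambda^{(r)}_{k_r})}{q_1!\cdots q_r!}\,Q^{(1)}_{k_1,i_1,q_1}Q^{(2)}_{k_2,i_2,q_2}\cdots Q^{(r)}_{k_r,i_r,q_r}.$$ Here: - $k_l$ ranges over $1,\dots,K_l$ and $i_l$ over $1,\dots,\alpha^{(G)}_{l,k_l}$; - $Q^{(l)}_{k,i,0}=P^{(l)}_{k,i}$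 and $Q^{(l)}_{k,i,q}=(N^{(l)}_{k,i})^{q}$ for $q\ge1$; - the product of the $Q$'s is the ordered product from $l=1$ to $l=r$. Equivalently, the sum splits into three parts: - a pure projector term ($q_1=\dots=q_r=0$); - mixed terms, in which for each nonempty proper subset $\{\iota_1,\dots,\iota_\kappa\}\subsetneq\{1,\dots,r\}$ the $q_{\iota_j}\ge1$ and the other $q$'s equal $0$; - a pure nilpotent term (all $q_l\ge1$).
   Context: Jordan data. Let $X\in\mathbb{C}^{m\times m}$ have Jordan decomposition $$X=U\Big(\bigoplus_{k=1}^{K}\bigoplus_{i=1}^{\alpha_k^{(G)}}J_{m_{k,i}}(\lambda_k)\Big)U^{-1}.$$ Here: - $U$ is invertible; - $\lambda_1,\dots,\lambda_K$ are the distinct eigenvalues of $X$; - $\alpha_k^{(G)}$ is the geometric multiplicity of $\lambda_k$; - $m_{k,i}\ge 1$ are the Jordan block sizes, and $\alpha_k^{(A)}=\sum_{i}m_{k,i}$ is the algebraic multiplicity of $\lambda_k$; - $J_n(\lambda)=\lambda I_n+\acute J_n$, where $\acute J_n$ is the $n\times n$ matrix with ones on the superdiagonal and zeros elsewhere. Let $I_{k,i}$ (resp. $\acute J_{k,i}$) denote the $m\times m$ block-diagonal matrix, in the same block layout as the Jordan form, whose $(k,i)$ diagonal block is $I_{m_{k,i}}$ (resp. $\acute J_{m_{k,i}}$) and whose other blocks are zero. Define $P_{k,i}=U I_{k,i}U^{-1}$ (projectors) and $N_{k,i}=U\acute J_{k,i}U^{-1}$ (nilpotents). The matrices $X_l$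 need not commute, and the order of factors in $f(X_1,\dots,X_r)$ is as written. *)

theory Defs
  imports "Jordan_Normal_Form.Jordan_Normal_Form" "HOL-Analysis.Infinite_Sum" "HOL-Analysis.Derivative"
begin

text \<open>Multi-indices for r variables (variables indexed 0..r-1), extended by 0.\<close>
definition midx :: "nat \<Rightarrow> (nat \<Rightarrow> nat) set" where
  "midx r = {e. \<forall>l\<ge>r. e l = 0}"

definition pser :: "((nat \<Rightarrow> nat) \<Rightarrow> complex) \<Rightarrow> nat \<Rightarrow> (nat \<Rightarrow> complex) \<Rightarrow> complex" where
  "pser a r z = (\<Sum>\<^sub>\<infinity>e\<in>midx r. a e * (\<Prod>l<r. z l ^ e l))"

definition pdiff :: "nat \<Rightarrow> ((nat \<Rightarrow> complex) \<Rightarrow> complex) \<Rightarrow> (nat \<Rightarrow> complex) \<Rightarrow> complex" where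
  "pdiff l g z = deriv (\<lambda>w. g (z(l := w))) (z l)"

definition pdiffn :: "nat \<Rightarrow> nat \<Rightarrow> ((nat \<Rightarrow> complex) \<Rightarrow> complex) \<Rightarrow> (nat \<Rightarrow> complex) \<Rightarrow> complex" where
  "pdiffn l n g = ((pdiff l) ^^ n) g"

definition mixed_deriv :: "nat \<Rightarrow> (nat \<Rightarrow> nat) \<Rightarrow> ((nat \<Rightarrow> complex) \<Rightarrow> complex) \<Rightarrow> (nat \<Rightarrow> complex) \<Rightarrow> complex" where
  "mixed_deriv r q g = foldr (\<lambda>l h. pdiffn l (q l) h) [0..<r] g"

text \<open>Jordan data: K distinct eigenvalues lam k (k<K), alpha k blocks for eigenvalue k,
  block sizes msz k i (i < alpha k). The block layout is
  (+)_(k<K) (+)_(i<alpha k) J_(msz k i)(lam k).\<close>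
definition block_layout :: "nat \<Rightarrow> (nat \<Rightarrow> nat) \<Rightarrow> (nat \<Rightarrow> nat \<Rightarrow> nat) \<Rightarrow>
    (nat \<Rightarrow> nat \<Rightarrow> complex mat) \<Rightarrow> complex mat" where
  "block_layout K alpha msz B =
     diag_block_mat (concat (map (\<lambda>k. map (\<lambda>i. B k i) [0..<alpha k]) [0..<K]))"

definition jordan_form :: "nat \<Rightarrow> (nat \<Rightarrow> complex) \<Rightarrow> (nat \<Rightarrow> nat) \<Rightarrow> (nat \<Rightarrow> nat \<Rightarrow> nat) \<Rightarrow> complex mat" where
  "jordan_form K lam alpha msz = block_layout K alpha msz (\<lambda>k i. jordan_block (msz k i) (lam k))"

definition blk_id :: "nat \<Rightarrow> (nat \<Rightarrow> nat) \<Rightarrow> (nat \<Rightarrow> nat \<Rightarrow> nat) \<Rightarrow> nat \<Rightarrow> nat \<Rightarrow> complex mat" where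
  "blk_id K alpha msz k0 i0 = block_layout K alpha msz
     (\<lambda>k i. if (k, i) = (k0, i0) then 1\<^sub>m (msz k i) else 0\<^sub>m (msz k i) (msz k i))"

definition blk_nil :: "nat \<Rightarrow> (nat \<Rightarrow> nat) \<Rightarrow> (nat \<Rightarrow> nat \<Rightarrow> nat) \<Rightarrow> nat \<Rightarrow> nat \<Rightarrow> complex mat" where
  "blk_nil K alpha msz k0 i0 = block_layout K alpha msz
     (\<lambda>k i. if (k, i) = (k0, i0) then jordan_block (msz k i) 0 else 0\<^sub>m (msz k i) (msz k i))"

definition ord_prod :: "nat \<Rightarrow> nat \<Rightarrow> (nat \<Rightarrow> complex mat) \<Rightarrow> complex mat" where
  "ord_prod m r A = foldr (\<lambda>l B. A l * B) [0..<r] (1\<^sub>m m)"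

end

theory Submission
  imports Defs
begin

lemma lincomb_mult:
  fixes c d :: "_ \<Rightarrow> 'a::comm_ring_1"
  assumes S: "finite S" and T: "finite T"
    and A: "\<And>s. s \<in> S \<Longrightarrow> A s \<in> carrier_mat n m"
    and B: "\<And>t. t \<in> T \<Longrightarrow> B t \<in> carrier_mat m k"
  shows "Matrix.mat n m (\<lambda>ps. \<Sum>s\<in>S. c s * A s $$ ps) * Matrix.mat m k (\<lambda>ps. \<Sum>t\<in>T. d t * B t $$ ps)
       = Matrix.mat n k (\<lambda>ps. \<Sum>st\<in>S\<times>T. c (fst st) * d (snd st) * (A (fst st) * B (snd st)) $$ ps)"
proof (rule eq_matI)
  fix i j assume ij: "i < dim_row (Matrix.mat n k (\<lambda>ps. \<Sum>st\<in>S\<times>T. c (fst st) * d (snd st) * (A (fst st) * B (snd st)) $$ ps))"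
     "j < dim_col (Matrix.mat n k (\<lambda>ps. \<Sum>st\<in>S\<times>T. c (fst st) * d (snd st) * (A (fst st) * B (snd st)) $$ ps))"
  hence i: "i < n" and j: "j < k" by auto
  have "(Matrix.mat n m (\<lambda>ps. \<Sum>s\<in>S. c s * A s $$ ps) * Matrix.mat m k (\<lambda>ps. \<Sum>t\<in>T. d t * B t $$ ps)) $$ (i,j)
     = (\<Sum>a<m. (\<Sum>s\<in>S. c s * A s $$ (i,a)) * (\<Sum>t\<in>T. d t * B t $$ (a,j)))"
    using i j by (simp add: scalar_prod_def atLeast0LessThan)
  also have "\<dots> = (\<Sum>a<m. \<Sum>s\<in>S. \<Sum>t\<in>T. c s * d t * (A s $$ (i,a) * B t $$ (a,j)))"
    by (simp add: sum_product algebra_simps)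
  also have "\<dots> = (\<Sum>s\<in>S. \<Sum>t\<in>T. \<Sum>a<m. c s * d t * (A s $$ (i,a) * B t $$ (a,j)))"
    by (subst sum.swap, rule sum.cong, simp, rule sum.swap)
  also have "\<dots> = (\<Sum>s\<in>S. \<Sum>t\<in>T. c s * d t * (A s * B t) $$ (i,j))"
  proof (intro sum.cong refl)
    fix s t assume s: "s \<in> S" and t: "t \<in> T"
    show "(\<Sum>a<m. c s * d t * (A s $$ (i,a) * B t $$ (a,j))) = c s * d t * (A s * B t) $$ (i,j)"
      using A[OF s] B[OF t] i j by (simp add: scalar_prod_def atLeast0LessThan sum_distrib_left)
  qed
  also have "\<dots> = (\<Sum>st\<in>S\<times>T. c (fst st) * d (snd st) * (A (fst st) * B (snd st)) $$ (i,j))"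
    by (simp add: sum.cartesian_product split_def)
  finally show "(Matrix.mat n m (\<lambda>ps. \<Sum>s\<in>S. c s * A s $$ ps) * Matrix.mat m k (\<lambda>ps. \<Sum>t\<in>T. d t * B t $$ ps)) $$ (i,j)
     = Matrix.mat n k (\<lambda>ps. \<Sum>st\<in>S\<times>T. c (fst st) * d (snd st) * (A (fst st) * B (snd st)) $$ ps) $$ (i,j)"
    using i j by simp
qed auto

lemma mat_single: "(A::'a::comm_ring_1 mat) \<in> carrier_mat n m \<Longrightarrow> A = Matrix.mat n m (\<lambda>ps. \<Sum>s\<in>{()}. 1 * A $$ ps)"
  by (intro eq_matI) auto

definition tup :: "nat list \<Rightarrow> (nat \<Rightarrow> 'b set) \<Rightarrow> 'b \<Rightarrow> (nat \<Rightarrow> 'b) set" where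
  "tup L T d = {\<tau>. (\<forall>l\<in>set L. \<tau> l \<in> T l) \<and> (\<forall>l. l \<notin> set L \<longrightarrow> \<tau> l = d)}"

lemma tup_Nil: "tup [] T d = {\<lambda>_. d}"
  by (auto simp: tup_def)

lemma finite_tup: assumes "\<And>l. l \<in> set L \<Longrightarrow> finite (T l)" shows "finite (tup L T d)"
  using assms
proof (induct L)
  case Nil thus ?case by (simp add: tup_Nil)
next
  case (Cons x L)
  have "tup (x # L) T d \<subseteq> (\<lambda>(t, \<tau>). \<tau>(x := t)) ` (T x \<times> tup L T d)"
  proof
    fix \<tau> assume \<tau>: "\<tau> \<in> tup (x # L) T d"
    show "\<tau> \<in> (\<lambda>(t, \<tau>). \<tau>(x := t)) ` (T x \<times> tup L T d)"
    proof (cases "x \<in> set L")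
      case True
      hence "\<tau> = \<tau>(x := \<tau> x)" by simp
      thus ?thesis using \<tau> True by (auto simp: tup_def intro!: image_eqI[of _ _ "(\<tau> x, \<tau>)"])
    next
      case False
      show ?thesis using \<tau> False
        by (auto simp: tup_def intro!: image_eqI[of _ _ "(\<tau> x, \<tau>(x := d))"])
    qed
  qed
  moreover have "finite (T x \<times> tup L T d)" using Cons by auto
  ultimately show ?case by (meson finite_imageI finite_subset)
qed

lemma ord_prod_expand:
  fixes c :: "nat \<Rightarrow> 'b \<Rightarrow> 'a::comm_ring_1"
  assumes dist: "distinct L"
    and fin: "\<And>l. l \<in> set L \<Longrightarrow> finite (T l)"
    and B: "\<And>l t. l \<in> set L \<Longrightarrow> t \<in> T l \<Longrightarrow> B l t \<in> carrier_mat m m"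
  shows "foldr (\<lambda>l M. Matrix.mat m m (\<lambda>ps. \<Sum>t\<in>T l. c l t * B l t $$ ps) * M) L (1\<^sub>m m)
    = Matrix.mat m m (\<lambda>ps. \<Sum>\<tau>\<in>tup L T d. (\<Prod>l\<in>set L. c l (\<tau> l)) * foldr (\<lambda>l M. B l (\<tau> l) * M) L (1\<^sub>m m) $$ ps)"
  using assms
proof (induct L)
  case Nil
  show ?case by (intro eq_matI) (auto simp: tup_Nil)
next
  case (Cons x L)
  hence x: "x \<notin> set L" and dL: "distinct L" by auto
  let ?F = "\<lambda>\<tau>. foldr (\<lambda>l M. B l (\<tau> l) * M) L (1\<^sub>m m)"
  have Bc: "\<And>l t. l \<in> set L \<Longrightarrow> t \<in> T l \<Longrightarrow> B l t \<in> carrier_mat m m" using Cons.prems by auto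
  have carF0: "\<forall>l\<in>set L'. \<tau> l \<in> T l \<Longrightarrow> set L' \<subseteq> set L \<Longrightarrow> foldr (\<lambda>l M. B l (\<tau> l) * M) L' (1\<^sub>m m) \<in> carrier_mat m m" for \<tau> L'
  proof (induct L')
    case Nil thus ?case by simp
  next
    case (Cons y L')
    have "B y (\<tau> y) \<in> carrier_mat m m" using Cons(2,3) Bc by auto
    moreover have "foldr (\<lambda>l M. B l (\<tau> l) * M) L' (1\<^sub>m m) \<in> carrier_mat m m"
      using Cons by auto
    ultimately show ?case by simp
  qed
  have carF: "?F \<tau> \<in> carrier_mat m m" if "\<tau> \<in> tup L T d" for \<tau>
    using carF0[of L \<tau>] that by (auto simp: tup_def)
  have IH: "foldr (\<lambda>l M. Matrix.mat m m (\<lambda>ps. \<Sum>t\<in>T l. c l t * B l t $$ ps) * M) L (1\<^sub>m m)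
    = Matrix.mat m m (\<lambda>ps. \<Sum>\<tau>\<in>tup L T d. (\<Prod>l\<in>set L. c l (\<tau> l)) * ?F \<tau> $$ ps)"
    using Cons by auto
  have "foldr (\<lambda>l M. Matrix.mat m m (\<lambda>ps. \<Sum>t\<in>T l. c l t * B l t $$ ps) * M) (x # L) (1\<^sub>m m)
    = Matrix.mat m m (\<lambda>ps. \<Sum>t\<in>T x. c x t * B x t $$ ps) *
      Matrix.mat m m (\<lambda>ps. \<Sum>\<tau>\<in>tup L T d. (\<Prod>l\<in>set L. c l (\<tau> l)) * ?F \<tau> $$ ps)"
    using IH by simp
  also have "\<dots> = Matrix.mat m m (\<lambda>ps. \<Sum>st\<in>T x \<times> tup L T d.
       c x (fst st) * (\<Prod>l\<in>set L. c l (snd st l)) * (B x (fst st) * ?F (snd st)) $$ ps)"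
    by (rule lincomb_mult) (use Cons carF finite_tup[of L T d] in auto)
  also have "\<dots> = Matrix.mat m m (\<lambda>ps. \<Sum>\<tau>\<in>tup (x # L) T d. (\<Prod>l\<in>set (x # L). c l (\<tau> l)) *
      foldr (\<lambda>l M. B l (\<tau> l) * M) (x # L) (1\<^sub>m m) $$ ps)"
  proof (intro cong_mat refl)
    fix ps
    show "(\<Sum>st\<in>T x \<times> tup L T d.
       c x (fst st) * (\<Prod>l\<in>set L. c l (snd st l)) * (B x (fst st) * ?F (snd st)) $$ ps)
      = (\<Sum>\<tau>\<in>tup (x # L) T d. (\<Prod>l\<in>set (x # L). c l (\<tau> l)) *
      foldr (\<lambda>l M. B l (\<tau> l) * M) (x # L) (1\<^sub>m m) $$ ps)"
    proof (rule sum.reindex_bij_witness[of _ "\<lambda>\<tau>. (\<tau> x, \<tau>(x := d))" "\<lambda>st. (snd st)(x := fst st)"])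
      fix st assume st: "st \<in> T x \<times> tup L T d"
      show "(((snd st)(x := fst st)) x, ((snd st)(x := fst st))(x := d)) = st"
        using st x by (cases st) (auto simp: tup_def)
      show "(snd st)(x := fst st) \<in> tup (x # L) T d" using st x by (auto simp: tup_def)
      have e1: "(\<Prod>l\<in>set (x # L). c l (((snd st)(x := fst st)) l)) = c x (fst st) * (\<Prod>l\<in>set L. c l (snd st l))"
      proof -
        have "(\<Prod>l\<in>set L. c l (((snd st)(x := fst st)) l)) = (\<Prod>l\<in>set L. c l (snd st l))"
          by (rule prod.cong) (use x in auto)
        thus ?thesis using x by simp
      qed
      have e2: "foldr (\<lambda>l M. B l (((snd st)(x := fst st)) l) * M) L (1\<^sub>m m) = ?F (snd st)"
        using x by (intro foldr_cong) auto
      show "(\<Prod>l\<in>set (x # L). c l (((snd st)(x := fst st)) l)) *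
        foldr (\<lambda>l M. B l (((snd st)(x := fst st)) l) * M) (x # L) (1\<^sub>m m) $$ ps =
        c x (fst st) * (\<Prod>l\<in>set L. c l (snd st l)) * (B x (fst st) * ?F (snd st)) $$ ps"
        using e1 e2 by simp
    next
      fix \<tau> assume \<tau>: "\<tau> \<in> tup (x # L) T d"
      show "(snd (\<tau> x, \<tau>(x := d)))(x := fst (\<tau> x, \<tau>(x := d))) = \<tau>" by simp
      show "(\<tau> x, \<tau>(x := d)) \<in> T x \<times> tup L T d" using \<tau> x by (auto simp: tup_def)
    qed
  qed
  finally show ?case .
qed


lemma diag_block_zero: "diag_block_mat (map (\<lambda>y. 0\<^sub>m (sz y) (sz y)) L) = 0\<^sub>m (sum_list (map sz L)) (sum_list (map sz L))"
  by (induct L) (auto simp: Let_def dim_diag_block_mat o_def)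
lemma dim_diag_block_sz:
  assumes "\<And>y. y \<in> set L \<Longrightarrow> F y \<in> carrier_mat (sz y) (sz y)"
  shows "diag_block_mat (map F L) \<in> carrier_mat (sum_list (map sz L)) (sum_list (map sz L))"
proof -
  have r: "map (dim_row \<circ> F) L = map sz L"
    by (rule map_cong[OF refl]) (use assms in \<open>auto dest: carrier_matD\<close>)
  have c: "map (dim_col \<circ> F) L = map sz L"
    by (rule map_cong[OF refl]) (use assms in \<open>auto dest: carrier_matD\<close>)
  show ?thesis unfolding carrier_mat_def mem_Collect_eq dim_diag_block_mat map_map r c by simp
qed

lemma diag_block_lincomb:
  fixes c :: "'c \<Rightarrow> 'b \<Rightarrow> 'a::comm_ring_1"
  assumes "distinct L"
    and fin: "\<And>x. x \<in> set L \<Longrightarrow> finite (S x)"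
    and G: "\<And>x j. x \<in> set L \<Longrightarrow> j \<in> S x \<Longrightarrow> G x j \<in> carrier_mat (sz x) (sz x)"
  shows "diag_block_mat (map (\<lambda>x. Matrix.mat (sz x) (sz x) (\<lambda>ps. \<Sum>j\<in>S x. c x j * G x j $$ ps)) L)
    = Matrix.mat (sum_list (map sz L)) (sum_list (map sz L)) (\<lambda>ps. \<Sum>xj\<in>Sigma (set L) S.
        c (fst xj) (snd xj) * diag_block_mat (map (\<lambda>y. if y = fst xj then G (fst xj) (snd xj) else 0\<^sub>m (sz y) (sz y)) L) $$ ps)"
  using assms
proof (induct L)
  case Nil
  show ?case by (intro eq_matI) auto
next
  case (Cons x L)
  hence x: "x \<notin> set L" and dL: "distinct L" by auto
  define N where "N = sum_list (map sz L)"
  define n where "n = sz x"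
  let ?A = "Matrix.mat n n (\<lambda>ps. \<Sum>j\<in>S x. c x j * G x j $$ ps)"
  let ?DL = "\<lambda>y' j'. diag_block_mat (map (\<lambda>y. if y = y' then G y' j' else 0\<^sub>m (sz y) (sz y)) L)"
  have IH: "diag_block_mat (map (\<lambda>x. Matrix.mat (sz x) (sz x) (\<lambda>ps. \<Sum>j\<in>S x. c x j * G x j $$ ps)) L)
    = Matrix.mat N N (\<lambda>ps. \<Sum>xj\<in>Sigma (set L) S. c (fst xj) (snd xj) * ?DL (fst xj) (snd xj) $$ ps)"
    unfolding N_def using Cons by auto
  have carDL: "?DL y j \<in> carrier_mat N N" if "y \<in> set L" "j \<in> S y" for y j
    unfolding N_def by (rule dim_diag_block_sz) (use that Cons.prems in auto)
  have DLx: "?DL x j = 0\<^sub>m N N" for j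
  proof -
    have eq: "map (\<lambda>y. if y = x then G x j else 0\<^sub>m (sz y) (sz y)) L = map (\<lambda>y. 0\<^sub>m (sz y) (sz y)) L"
      using x by (intro map_cong[OF refl]) auto
    show ?thesis unfolding N_def eq diag_block_zero ..
  qed
  have Gx: "G x j \<in> carrier_mat n n" if "j \<in> S x" for j using Cons.prems that unfolding n_def by auto
  have Sig: "Sigma (set (x # L)) S = Pair x ` S x \<union> Sigma (set L) S" by auto
  have disj: "Pair x ` S x \<inter> Sigma (set L) S = {}" using x by auto
  have finS: "finite (Sigma (set L) S)" using Cons.prems by auto
  have finx: "finite (Pair x ` S x)" using Cons.prems by auto
  show ?case
  proof (rule eq_matI)
    fix p s assume "p < dim_row (Matrix.mat (sum_list (map sz (x # L))) (sum_list (map sz (x # L)))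
       (\<lambda>ps. \<Sum>xj\<in>Sigma (set (x # L)) S. c (fst xj) (snd xj) *
        diag_block_mat (map (\<lambda>y. if y = fst xj then G (fst xj) (snd xj) else 0\<^sub>m (sz y) (sz y)) (x # L)) $$ ps))"
      "s < dim_col (Matrix.mat (sum_list (map sz (x # L))) (sum_list (map sz (x # L)))
       (\<lambda>ps. \<Sum>xj\<in>Sigma (set (x # L)) S. c (fst xj) (snd xj) *
        diag_block_mat (map (\<lambda>y. if y = fst xj then G (fst xj) (snd xj) else 0\<^sub>m (sz y) (sz y)) (x # L)) $$ ps))"
    hence p: "p < n + N" and s: "s < n + N" by (auto simp: N_def n_def)
    have blk: "diag_block_mat (map (\<lambda>y. if y = y' then G y' j' else 0\<^sub>m (sz y) (sz y)) (x # L)) $$ (p, s)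
      = (if p < n then if s < n then (if x = y' then G y' j' $$ (p,s) else 0) else 0
         else if s < n then 0 else ?DL y' j' $$ (p - n, s - n))"
      if "y' \<in> set (x # L)" "j' \<in> S y'" for y' j'
    proof -
      have c1: "(if x = y' then G y' j' else 0\<^sub>m (sz x) (sz x)) \<in> carrier_mat n n"
        using Gx that unfolding n_def by auto
      have c2: "?DL y' j' \<in> carrier_mat N N"
      proof (cases "y' = x")
        case True show ?thesis using DLx[of j'] unfolding True by simp
      next
        case False thus ?thesis using carDL that by auto
      qed
      show ?thesis using c1 c2 p s
        by (auto simp: Let_def)
    qed
    have lhs: "diag_block_mat (map (\<lambda>x. Matrix.mat (sz x) (sz x) (\<lambda>ps. \<Sum>j\<in>S x. c x j * G x j $$ ps)) (x # L)) $$ (p,s)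
      = (if p < n then if s < n then ?A $$ (p,s) else 0
         else if s < n then 0 else (\<Sum>xj\<in>Sigma (set L) S. c (fst xj) (snd xj) * ?DL (fst xj) (snd xj) $$ (p - n, s - n)))"
      using p s by (auto simp: Let_def IH n_def N_def)
    have "Matrix.mat (sum_list (map sz (x # L))) (sum_list (map sz (x # L)))
       (\<lambda>ps. \<Sum>xj\<in>Sigma (set (x # L)) S. c (fst xj) (snd xj) *
        diag_block_mat (map (\<lambda>y. if y = fst xj then G (fst xj) (snd xj) else 0\<^sub>m (sz y) (sz y)) (x # L)) $$ ps) $$ (p,s)
      = (\<Sum>xj\<in>Sigma (set (x # L)) S. c (fst xj) (snd xj) *
          (if p < n then if s < n then (if x = fst xj then G (fst xj) (snd xj) $$ (p,s) else 0) else 0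
         else if s < n then 0 else ?DL (fst xj) (snd xj) $$ (p - n, s - n)))"
    proof -
      have "Matrix.mat (sum_list (map sz (x # L))) (sum_list (map sz (x # L)))
       (\<lambda>ps. \<Sum>xj\<in>Sigma (set (x # L)) S. c (fst xj) (snd xj) *
        diag_block_mat (map (\<lambda>y. if y = fst xj then G (fst xj) (snd xj) else 0\<^sub>m (sz y) (sz y)) (x # L)) $$ ps) $$ (p,s)
       = (\<Sum>xj\<in>Sigma (set (x # L)) S. c (fst xj) (snd xj) *
        diag_block_mat (map (\<lambda>y. if y = fst xj then G (fst xj) (snd xj) else 0\<^sub>m (sz y) (sz y)) (x # L)) $$ (p,s))"
        using p s by (simp add: N_def n_def)
      also have "\<dots> = (\<Sum>xj\<in>Sigma (set (x # L)) S. c (fst xj) (snd xj) *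
          (if p < n then if s < n then (if x = fst xj then G (fst xj) (snd xj) $$ (p,s) else 0) else 0
         else if s < n then 0 else ?DL (fst xj) (snd xj) $$ (p - n, s - n)))"
      proof (rule sum.cong[OF refl])
        fix xj assume xj: "xj \<in> Sigma (set (x # L)) S"
        have "fst xj \<in> set (x # L)" "snd xj \<in> S (fst xj)" using xj by auto
        from blk[OF this] show "c (fst xj) (snd xj) *
          diag_block_mat (map (\<lambda>y. if y = fst xj then G (fst xj) (snd xj) else 0\<^sub>m (sz y) (sz y)) (x # L)) $$ (p,s)
          = c (fst xj) (snd xj) * (if p < n then if s < n then (if x = fst xj then G (fst xj) (snd xj) $$ (p,s) else 0) else 0
         else if s < n then 0 else ?DL (fst xj) (snd xj) $$ (p - n, s - n))" by simp
      qed
      finally show ?thesis .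
    qed
    also have "\<dots> = (\<Sum>xj\<in>Pair x ` S x. c (fst xj) (snd xj) *
          (if p < n then if s < n then (if x = fst xj then G (fst xj) (snd xj) $$ (p,s) else 0) else 0
         else if s < n then 0 else ?DL (fst xj) (snd xj) $$ (p - n, s - n)))
       + (\<Sum>xj\<in>Sigma (set L) S. c (fst xj) (snd xj) *
          (if p < n then if s < n then (if x = fst xj then G (fst xj) (snd xj) $$ (p,s) else 0) else 0
         else if s < n then 0 else ?DL (fst xj) (snd xj) $$ (p - n, s - n)))"
      unfolding Sig by (rule sum.union_disjoint[OF finx finS disj])
    also have "\<dots> = (if p < n then if s < n then ?A $$ (p,s) else 0
         else if s < n then 0 else (\<Sum>xj\<in>Sigma (set L) S. c (fst xj) (snd xj) * ?DL (fst xj) (snd xj) $$ (p - n, s - n)))"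
    proof -
      have a: "(\<Sum>xj\<in>Pair x ` S x. c (fst xj) (snd xj) *
          (if p < n then if s < n then (if x = fst xj then G (fst xj) (snd xj) $$ (p,s) else 0) else 0
         else if s < n then 0 else ?DL (fst xj) (snd xj) $$ (p - n, s - n)))
        = (if p < n \<and> s < n then (\<Sum>j\<in>S x. c x j * G x j $$ (p,s)) else 0)"
      proof -
        have t: "(if p < n then if s < n then (if x = x then G x j $$ (p,s) else 0) else 0
         else if s < n then 0 else ?DL x j $$ (p - n, s - n)) = (if p < n \<and> s < n then G x j $$ (p,s) else 0)" for j
          using p s DLx[of j] by (auto simp: N_def)
        have "(\<Sum>xj\<in>Pair x ` S x. c (fst xj) (snd xj) *
          (if p < n then if s < n then (if x = fst xj then G (fst xj) (snd xj) $$ (p,s) else 0) else 0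
         else if s < n then 0 else ?DL (fst xj) (snd xj) $$ (p - n, s - n)))
          = (\<Sum>j\<in>S x. c x j *
          (if p < n then if s < n then (if x = x then G x j $$ (p,s) else 0) else 0
         else if s < n then 0 else ?DL x j $$ (p - n, s - n)))"
          by (simp add: sum.reindex inj_on_def cong: if_cong)
        also have "\<dots> = (\<Sum>j\<in>S x. c x j * (if p < n \<and> s < n then G x j $$ (p,s) else 0))"
          unfolding t ..
        also have "\<dots> = (if p < n \<and> s < n then (\<Sum>j\<in>S x. c x j * G x j $$ (p,s)) else 0)"
          by auto
        finally show ?thesis .
      qed
      have b: "(\<Sum>xj\<in>Sigma (set L) S. c (fst xj) (snd xj) *
          (if p < n then if s < n then (if x = fst xj then G (fst xj) (snd xj) $$ (p,s) else 0) else 0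
         else if s < n then 0 else ?DL (fst xj) (snd xj) $$ (p - n, s - n)))
        = (if p < n then 0 else if s < n then 0 else (\<Sum>xj\<in>Sigma (set L) S. c (fst xj) (snd xj) * ?DL (fst xj) (snd xj) $$ (p - n, s - n)))"
      proof -
        have b0: "c (fst xj) (snd xj) *
          (if p < n then if s < n then (if x = fst xj then G (fst xj) (snd xj) $$ (p,s) else 0) else 0
         else if s < n then 0 else ?DL (fst xj) (snd xj) $$ (p - n, s - n))
          = (if p < n \<or> s < n then 0 else c (fst xj) (snd xj) * ?DL (fst xj) (snd xj) $$ (p - n, s - n))"
          if "xj \<in> Sigma (set L) S" for xj
          using that x by auto
        show ?thesis by (cases "p < n \<or> s < n") (auto simp: b0 cong: sum.cong)
      qed
      show ?thesis unfolding a b using p s by auto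
    qed
    also have "\<dots> = diag_block_mat (map (\<lambda>x. Matrix.mat (sz x) (sz x) (\<lambda>ps. \<Sum>j\<in>S x. c x j * G x j $$ ps)) (x # L)) $$ (p,s)"
      using lhs by simp
    finally show "diag_block_mat (map (\<lambda>x. Matrix.mat (sz x) (sz x) (\<lambda>ps. \<Sum>j\<in>S x. c x j * G x j $$ ps)) (x # L)) $$ (p,s)
      = Matrix.mat (sum_list (map sz (x # L))) (sum_list (map sz (x # L)))
       (\<lambda>ps. \<Sum>xj\<in>Sigma (set (x # L)) S. c (fst xj) (snd xj) *
        diag_block_mat (map (\<lambda>y. if y = fst xj then G (fst xj) (snd xj) else 0\<^sub>m (sz y) (sz y)) (x # L)) $$ ps) $$ (p,s)"
      by simp
  next
    show "dim_row (diag_block_mat (map (\<lambda>x. Matrix.mat (sz x) (sz x) (\<lambda>ps. \<Sum>j\<in>S x. c x j * G x j $$ ps)) (x # L)))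
      = dim_row (Matrix.mat (sum_list (map sz (x # L))) (sum_list (map sz (x # L)))
       (\<lambda>ps. \<Sum>xj\<in>Sigma (set (x # L)) S. c (fst xj) (snd xj) *
        diag_block_mat (map (\<lambda>y. if y = fst xj then G (fst xj) (snd xj) else 0\<^sub>m (sz y) (sz y)) (x # L)) $$ ps))"
      by (simp add: dim_diag_block_mat o_def)
    show "dim_col (diag_block_mat (map (\<lambda>x. Matrix.mat (sz x) (sz x) (\<lambda>ps. \<Sum>j\<in>S x. c x j * G x j $$ ps)) (x # L)))
      = dim_col (Matrix.mat (sum_list (map sz (x # L))) (sum_list (map sz (x # L)))
       (\<lambda>ps. \<Sum>xj\<in>Sigma (set (x # L)) S. c (fst xj) (snd xj) *
        diag_block_mat (map (\<lambda>y. if y = fst xj then G (fst xj) (snd xj) else 0\<^sub>m (sz y) (sz y)) (x # L)) $$ ps))"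
      by (simp add: dim_diag_block_mat o_def)
  qed
qed

lemma jordan_pow_expand:
  "jordan_block s (lam::'a::comm_ring_1) ^\<^sub>m e = Matrix.mat s s (\<lambda>ps. \<Sum>q\<in>{..<s}. (of_nat (e choose q) * lam ^ (e - q)) * (jordan_block s 0 ^\<^sub>m q) $$ ps)"
proof (rule eq_matI)
  fix i j assume "i < dim_row (Matrix.mat s s (\<lambda>ps. \<Sum>q\<in>{..<s}. (of_nat (e choose q) * lam ^ (e - q)) * (jordan_block s 0 ^\<^sub>m q) $$ ps))"
    "j < dim_col (Matrix.mat s s (\<lambda>ps. \<Sum>q\<in>{..<s}. (of_nat (e choose q) * lam ^ (e - q)) * (jordan_block s 0 ^\<^sub>m q) $$ ps))"
  hence i: "i < s" and j: "j < s" by auto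
  have t: "(of_nat (e choose q) * lam ^ (e - q)) * (jordan_block s (0::'a) ^\<^sub>m q) $$ (i,j)
     = (if q = j - i \<and> i \<le> j then of_nat (e choose q) * lam ^ (e - q) else 0)" for q
  proof -
    have "(jordan_block s (0::'a) ^\<^sub>m q) $$ (i,j) = (if i \<le> j then of_nat (q choose (j - i)) * 0 ^ (q + i - j) else 0)"
      unfolding jordan_block_pow using i j by simp
    also have "\<dots> = (if q = j - i \<and> i \<le> j then 1 else 0)"
      by (cases "q < j - i") (auto simp: binomial_eq_0 power_0_left)
    finally show ?thesis by simp
  qed
  have "(\<Sum>q\<in>{..<s}. (of_nat (e choose q) * lam ^ (e - q)) * (jordan_block s 0 ^\<^sub>m q) $$ (i,j))
     = (\<Sum>q\<in>{..<s}. if q = j - i \<and> i \<le> j then of_nat (e choose q) * lam ^ (e - q) else 0)"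
    unfolding t ..
  also have "\<dots> = (if i \<le> j then of_nat (e choose (j - i)) * lam ^ (e - (j - i)) else 0)"
    using j by (cases "i \<le> j") (auto simp: sum.delta)
  also have "\<dots> = (jordan_block s lam ^\<^sub>m e) $$ (i,j)"
  proof (cases "i \<le> j")
    case True
    show ?thesis
    proof (cases "j - i \<le> e")
      case True
      hence "e + i - j = e - (j - i)" using \<open>i \<le> j\<close> by auto
      thus ?thesis unfolding jordan_block_pow using i j \<open>i \<le> j\<close> by simp
    next
      case False
      thus ?thesis unfolding jordan_block_pow using i j \<open>i \<le> j\<close> by simp
    qed
  next
    case False thus ?thesis unfolding jordan_block_pow using i j by simp
  qed
  finally show "(jordan_block s lam ^\<^sub>m e) $$ (i, j) = Matrix.mat s s (\<lambda>ps. \<Sum>q\<in>{..<s}. (of_nat (e choose q) * lam ^ (e - q)) * (jordan_block s 0 ^\<^sub>m q) $$ ps) $$ (i, j)"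
    using i j by simp
qed auto

lemma zero_pow_mat: "q > 0 \<Longrightarrow> (0\<^sub>m n n :: 'a::semiring_1 mat) ^\<^sub>m q = 0\<^sub>m n n"
  by (induct q) (auto simp: gr0_conv_Suc)

lemma sum_unit_times: "sum g ({()} \<times> T) = sum (\<lambda>t. g ((), t)) T"
  by (rule sum.reindex_bij_witness[of _ "\<lambda>t. ((),t)" snd]) auto

lemma sum_times_unit: "sum g (T \<times> {()}) = sum (\<lambda>t. g (t, ())) T"
  by (rule sum.reindex_bij_witness[of _ "\<lambda>t. (t,())" fst]) auto

lemma conj_lincomb:
  fixes c :: "_ \<Rightarrow> 'a::comm_ring_1"
  assumes U: "U \<in> carrier_mat n m" and V: "V \<in> carrier_mat m n" and T: "finite T"
    and B: "\<And>t. t \<in> T \<Longrightarrow> B t \<in> carrier_mat m m"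
  shows "U * Matrix.mat m m (\<lambda>ps. \<Sum>t\<in>T. c t * B t $$ ps) * V = Matrix.mat n n (\<lambda>ps. \<Sum>t\<in>T. c t * (U * B t * V) $$ ps)"
proof -
  have "U * Matrix.mat m m (\<lambda>ps. \<Sum>t\<in>T. c t * B t $$ ps)
    = Matrix.mat n m (\<lambda>ps. \<Sum>s\<in>{()}. 1 * U $$ ps) * Matrix.mat m m (\<lambda>ps. \<Sum>t\<in>T. c t * B t $$ ps)"
    using mat_single[OF U] by simp
  also have "\<dots> = Matrix.mat n m (\<lambda>ps. \<Sum>st\<in>{()} \<times> T. 1 * c (snd st) * (U * B (snd st)) $$ ps)"
    by (rule lincomb_mult) (use U B T in auto)
  also have "\<dots> = Matrix.mat n m (\<lambda>ps. \<Sum>t\<in>T. c t * (U * B t) $$ ps)"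
    by (simp add: sum_unit_times)
  finally have 1: "U * Matrix.mat m m (\<lambda>ps. \<Sum>t\<in>T. c t * B t $$ ps) = Matrix.mat n m (\<lambda>ps. \<Sum>t\<in>T. c t * (U * B t) $$ ps)" .
  have "Matrix.mat n m (\<lambda>ps. \<Sum>t\<in>T. c t * (U * B t) $$ ps) * V
    = Matrix.mat n m (\<lambda>ps. \<Sum>t\<in>T. c t * (U * B t) $$ ps) * Matrix.mat m n (\<lambda>ps. \<Sum>s\<in>{()}. 1 * V $$ ps)"
    using mat_single[OF V] by simp
  also have "\<dots> = Matrix.mat n n (\<lambda>ps. \<Sum>st\<in>T \<times> {()}. c (fst st) * 1 * (U * B (fst st) * V) $$ ps)"
    by (rule lincomb_mult) (use U B T V in auto)
  also have "\<dots> = Matrix.mat n n (\<lambda>ps. \<Sum>t\<in>T. c t * (U * B t * V) $$ ps)"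
    by (simp add: sum_times_unit)
  finally show ?thesis unfolding 1 .
qed

definition blist :: "nat \<Rightarrow> (nat \<Rightarrow> nat) \<Rightarrow> (nat \<times> nat) list" where
  "blist K alpha = concat (map (\<lambda>k. map (\<lambda>i. (k,i)) [0..<alpha k]) [0..<K])"

lemma block_layout_blist: "block_layout K alpha msz B = diag_block_mat (map (\<lambda>x. B (fst x) (snd x)) (blist K alpha))"
  unfolding block_layout_def blist_def by (simp add: map_concat o_def)

lemma set_blist: "set (blist K alpha) = {(k,i). k < K \<and> i < alpha k}"
  by (auto simp: blist_def)

lemma distinct_blist: "distinct (blist K alpha)"
  unfolding blist_def by (induct K) (auto simp: distinct_map inj_on_def)

lemma sum_blist: "sum_list (map (\<lambda>x. msz (fst x) (snd x)) (blist K alpha)) = (\<Sum>k<K. \<Sum>i<alpha k. msz k i)"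
  unfolding blist_def
  by (induct K) (auto simp: o_def interv_sum_list_conv_sum_set_nat atLeast0LessThan)

definition QQ :: "complex mat \<Rightarrow> complex mat \<Rightarrow> nat \<Rightarrow> (nat \<Rightarrow> nat) \<Rightarrow> (nat \<Rightarrow> nat \<Rightarrow> nat) \<Rightarrow> nat \<times> nat \<times> nat \<Rightarrow> complex mat" where
  "QQ U Uinv K alpha msz t = (case t of (k,i,q) \<Rightarrow> if q = 0 then U * blk_id K alpha msz k i * Uinv
     else (U * blk_nil K alpha msz k i * Uinv) ^\<^sub>m q)"

lemma Xpow_expand:
  fixes U Uinv X :: "complex mat"
  assumes U: "U \<in> carrier_mat m m" and Ui: "Uinv \<in> carrier_mat m m" and UU: "U * Uinv = 1\<^sub>m m" "Uinv * U = 1\<^sub>m m"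
   and dims: "(\<Sum>k<K. \<Sum>i<alpha k. msz k i) = m"
   and X: "X = U * jordan_form K lam alpha msz * Uinv"
  shows "X ^\<^sub>m e = Matrix.mat m m (\<lambda>ps. \<Sum>t\<in>{(k,i,q). k < K \<and> i < alpha k \<and> q < msz k i}.
     (of_nat (e choose snd (snd t)) * lam (fst t) ^ (e - snd (snd t))) * QQ U Uinv K alpha msz t $$ ps)"
proof -
  define L where "L = blist K alpha"
  define sz where "sz = (\<lambda>x. msz (fst x) (snd x))"
  have N: "sum_list (map sz L) = m" unfolding L_def sz_def sum_blist dims ..
  have dL: "distinct L" unfolding L_def by (rule distinct_blist)
  define F where "F = (\<lambda>x. jordan_block (sz x) (lam (fst x)))"
  define cf where "cf = (\<lambda>(x::nat\<times>nat) q. of_nat (e choose q) * lam (fst x) ^ (e - q) :: complex)"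
  define G where "G = (\<lambda>(x::nat\<times>nat) q. jordan_block (sz x) (0::complex) ^\<^sub>m q)"
  define Bq where "Bq = (\<lambda>xj::(nat\<times>nat)\<times>nat. diag_block_mat (map (\<lambda>y. if y = fst xj then G (fst xj) (snd xj) else 0\<^sub>m (sz y) (sz y)) L))"
  have J: "jordan_form K lam alpha msz = diag_block_mat (map F L)"
    unfolding jordan_form_def block_layout_blist L_def F_def sz_def ..
  have carJ: "diag_block_mat (map F L) \<in> carrier_mat m m"
    using dim_diag_block_sz[of L F sz] N unfolding F_def by auto
  have carX: "X \<in> carrier_mat m m" unfolding X J using U Ui carJ by auto
  have "similar_mat_wit X (diag_block_mat (map F L)) U Uinv"
    unfolding similar_mat_wit_def Let_def using carX carJ U Ui UU X J by auto
  hence Xe: "X ^\<^sub>m e = U * diag_block_mat (map F L) ^\<^sub>m e * Uinv"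
    by (rule similar_mat_wit_pow_id)
  have "diag_block_mat (map F L) ^\<^sub>m e = diag_block_mat (map (\<lambda>A. A ^\<^sub>m e) (map F L))"
    by (rule diag_block_pow_mat) (auto simp: F_def)
  also have "\<dots> = diag_block_mat (map (\<lambda>x. Matrix.mat (sz x) (sz x) (\<lambda>ps. \<Sum>q\<in>{..<sz x}. cf x q * G x q $$ ps)) L)"
  proof -
    have Fe: "F x ^\<^sub>m e = Matrix.mat (sz x) (sz x) (\<lambda>ps. \<Sum>q\<in>{..<sz x}. cf x q * G x q $$ ps)" for x
      unfolding F_def cf_def G_def case_prod_conv by (rule jordan_pow_expand)
    show ?thesis unfolding map_map o_def Fe ..
  qed
  also have "\<dots> = Matrix.mat (sum_list (map sz L)) (sum_list (map sz L)) (\<lambda>ps. \<Sum>xj\<in>Sigma (set L) (\<lambda>x. {..<sz x}).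
        cf (fst xj) (snd xj) * Bq xj $$ ps)"
    unfolding Bq_def by (rule diag_block_lincomb[OF dL]) (auto simp: G_def)
  finally have Je: "diag_block_mat (map F L) ^\<^sub>m e = Matrix.mat m m (\<lambda>ps. \<Sum>xj\<in>Sigma (set L) (\<lambda>x. {..<sz x}).
        cf (fst xj) (snd xj) * Bq xj $$ ps)" unfolding N .
  have carBq: "Bq xj \<in> carrier_mat m m" for xj
    unfolding Bq_def N[symmetric] by (rule dim_diag_block_sz) (auto simp: G_def)
  have finS: "finite (Sigma (set L) (\<lambda>x. {..<sz x}))" by auto
  have "X ^\<^sub>m e = Matrix.mat m m (\<lambda>ps. \<Sum>xj\<in>Sigma (set L) (\<lambda>x. {..<sz x}). cf (fst xj) (snd xj) * (U * Bq xj * Uinv) $$ ps)"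
    unfolding Xe Je by (rule conj_lincomb[OF U Ui finS carBq])
  also have "\<dots> = Matrix.mat m m (\<lambda>ps. \<Sum>t\<in>{(k,i,q). k < K \<and> i < alpha k \<and> q < msz k i}.
     (of_nat (e choose snd (snd t)) * lam (fst t) ^ (e - snd (snd t))) * QQ U Uinv K alpha msz t $$ ps)"
  proof (intro cong_mat refl)
    fix ps
    show "(\<Sum>xj\<in>Sigma (set L) (\<lambda>x. {..<sz x}). cf (fst xj) (snd xj) * (U * Bq xj * Uinv) $$ ps) =
      (\<Sum>t\<in>{(k,i,q). k < K \<and> i < alpha k \<and> q < msz k i}.
     (of_nat (e choose snd (snd t)) * lam (fst t) ^ (e - snd (snd t))) * QQ U Uinv K alpha msz t $$ ps)"
    proof (rule sum.reindex_bij_witness[of _ "\<lambda>t. ((fst t, fst (snd t)), snd (snd t))" "\<lambda>xj. (fst (fst xj), snd (fst xj), snd xj)"])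
      fix t assume t: "t \<in> {(k,i,q). k < K \<and> i < alpha k \<and> q < msz k i}"
      show "(fst (fst ((fst t, fst (snd t)), snd (snd t))), snd (fst ((fst t, fst (snd t)), snd (snd t))),
         snd ((fst t, fst (snd t)), snd (snd t))) = t" by simp
      show "((fst t, fst (snd t)), snd (snd t)) \<in> Sigma (set L) (\<lambda>x. {..<sz x})"
        using t by (auto simp: L_def set_blist sz_def)
    next
      fix xj assume xj: "xj \<in> Sigma (set L) (\<lambda>x. {..<sz x})"
      obtain k i q where xjd: "xj = ((k,i),q)" by (metis prod.collapse)
      have ki: "(k,i) \<in> set L" and q: "q < msz k i" using xj xjd by (auto simp: sz_def)
      show "((fst (fst xj), snd (fst xj), snd xj) \<in> {(k,i,q). k < K \<and> i < alpha k \<and> q < msz k i})"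
        using ki q xjd by (auto simp: L_def set_blist)
      show "((fst (fst (fst xj), snd (fst xj), snd xj), fst (snd (fst (fst xj), snd (fst xj), snd xj))),
          snd (snd (fst (fst xj), snd (fst xj), snd xj))) = xj" by simp
      have QB: "QQ U Uinv K alpha msz (k,i,q) = U * Bq xj * Uinv"
      proof (cases "q = 0")
        case True
        have "blk_id K alpha msz k i = Bq xj"
          unfolding blk_id_def block_layout_blist Bq_def xjd G_def True L_def[symmetric]
          by (intro arg_cong[where f=diag_block_mat] map_cong[OF refl]) (auto simp: sz_def)
        thus ?thesis using True by (simp add: QQ_def)
      next
        case False
        define BN where "BN = blk_nil K alpha msz k i"
        have BN: "BN = diag_block_mat (map (\<lambda>y. if y = (k,i) then jordan_block (sz y) 0 else 0\<^sub>m (sz y) (sz y)) L)"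
          unfolding BN_def blk_nil_def block_layout_blist L_def[symmetric]
          by (intro arg_cong[where f=diag_block_mat] map_cong[OF refl]) (auto simp: sz_def)
        have carBN: "BN \<in> carrier_mat m m"
          unfolding BN N[symmetric] by (rule dim_diag_block_sz) auto
        have "BN ^\<^sub>m q = diag_block_mat (map (\<lambda>A. A ^\<^sub>m q) (map (\<lambda>y. if y = (k,i) then jordan_block (sz y) 0 else 0\<^sub>m (sz y) (sz y)) L))"
          unfolding BN by (rule diag_block_pow_mat) auto
        also have "\<dots> = Bq xj"
          unfolding Bq_def xjd G_def map_map o_def
          by (intro arg_cong[where f=diag_block_mat] map_cong[OF refl]) (use False in \<open>auto simp: zero_pow_mat\<close>)
        finally have BNq: "BN ^\<^sub>m q = Bq xj" .
        have "similar_mat_wit (U * BN * Uinv) BN U Uinv"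
          unfolding similar_mat_wit_def Let_def using carBN U Ui UU by auto
        hence "(U * BN * Uinv) ^\<^sub>m q = U * BN ^\<^sub>m q * Uinv" by (rule similar_mat_wit_pow_id)
        thus ?thesis using False BNq by (simp add: QQ_def BN_def)
      qed
      show "(of_nat (e choose snd (snd (fst (fst xj), snd (fst xj), snd xj))) *
          lam (fst (fst (fst xj), snd (fst xj), snd xj)) ^ (e - snd (snd (fst (fst xj), snd (fst xj), snd xj)))) *
          QQ U Uinv K alpha msz (fst (fst xj), snd (fst xj), snd xj) $$ ps
        = cf (fst xj) (snd xj) * (U * Bq xj * Uinv) $$ ps"
        using QB by (simp add: xjd cf_def)
    qed
  qed
  finally show ?thesis .
qed

fun ff :: "nat \<Rightarrow> nat \<Rightarrow> nat" where
  "ff n 0 = 1"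
| "ff n (Suc q) = ff n q * (n - q)"

lemma ff_zero: "n < q \<Longrightarrow> ff n q = 0"
proof (induct q)
  case (Suc q) thus ?case by (cases "n < q") auto
qed auto

lemma ff_choose: "ff n q = (n choose q) * fact q"
proof (induct q)
  case (Suc q)
  have "(n - q) * (n choose q) = Suc q * (n choose Suc q)"
    using binomial_absorb_comp[of n q] binomial_absorption[of q n] by simp
  thus ?case using Suc by (simp add: algebra_simps)
qed auto

lemma ff_summable: "norm (x::real) < 1 \<Longrightarrow> summable (\<lambda>n. real (ff (n + q) q) * x ^ n)"
proof (induct q arbitrary: x)
  case 0 thus ?case by (simp add: summable_geometric)
next
  case (Suc q)
  have "summable (\<lambda>n. diffs (\<lambda>n. real (ff (n + q) q)) n * x ^ n)"
    by (rule termdiff_converges[of x 1]) (use Suc in auto)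
  moreover have "diffs (\<lambda>n. real (ff (n + q) q)) n = real (ff (n + Suc q) (Suc q))" for n
    by (simp add: diffs_def algebra_simps)
  ultimately show ?case by simp
qed

lemma ff_bound:
  assumes t: "0 \<le> t" "t < \<rho>"
  shows "\<exists>C\<ge>0. \<forall>n. real (ff n q) * t ^ (n - q) \<le> C * \<rho> ^ n"
proof -
  have rho: "\<rho> > 0" using t by auto
  define x where "x = t / \<rho>"
  have x: "0 \<le> x" "x < 1" using t rho by (auto simp: x_def)
  have "summable (\<lambda>n. real (ff (n + q) q) * x ^ n)" by (rule ff_summable) (use x in auto)
  hence "(\<lambda>n. real (ff (n + q) q) * x ^ n) \<longlonglongrightarrow> 0" by (rule summable_LIMSEQ_zero)
  hence "Bseq (\<lambda>n. real (ff (n + q) q) * x ^ n)" by (rule convergent_imp_Bseq[OF convergentI])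
  then obtain B where B: "B > 0" "\<And>n. norm (real (ff (n + q) q) * x ^ n) \<le> B" by (auto elim: BseqE)
  have "real (ff n q) * t ^ (n - q) \<le> B / \<rho> ^ q * \<rho> ^ n" for n
  proof (cases "n < q")
    case True thus ?thesis using B rho by (simp add: ff_zero)
  next
    case False
    then obtain j where n: "n = j + q" by (metis add.commute le_add_diff_inverse not_less)
    have "real (ff n q) * t ^ (n - q) = (real (ff (j + q) q) * x ^ j) * \<rho> ^ j"
      using rho by (simp add: n x_def power_divide)
    also have "\<dots> \<le> B * \<rho> ^ j"
      using B(2)[of j] x rho by (intro mult_right_mono) auto
    also have "\<dots> = B / \<rho> ^ q * \<rho> ^ n" using rho by (simp add: n power_add)
    finally show ?thesis .
  qed
  thus ?thesis using B rho by (intro exI[of _ "B / \<rho> ^ q"]) auto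
qed

definition polyd :: "nat \<Rightarrow> (nat \<Rightarrow> ereal) \<Rightarrow> (nat \<Rightarrow> complex) set" where
  "polyd r R = {z. \<forall>l<r. ereal (cmod (z l)) < R l}"

definition tm :: "((nat \<Rightarrow> nat) \<Rightarrow> complex) \<Rightarrow> nat \<Rightarrow> (nat \<Rightarrow> nat) \<Rightarrow> (nat \<Rightarrow> complex) \<Rightarrow> (nat \<Rightarrow> nat) \<Rightarrow> complex" where
  "tm a r q z e = a e * (\<Prod>l<r. of_nat (ff (e l) (q l)) * z l ^ (e l - q l))"

definition Tq :: "((nat \<Rightarrow> nat) \<Rightarrow> complex) \<Rightarrow> nat \<Rightarrow> (nat \<Rightarrow> nat) \<Rightarrow> (nat \<Rightarrow> complex) \<Rightarrow> complex" where
  "Tq a r q z = (\<Sum>\<^sub>\<infinity>e\<in>midx r. tm a r q z e)"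

lemma tm_norm: "norm (tm a r q z e) = norm (a e) * (\<Prod>l<r. real (ff (e l) (q l)) * norm (z l) ^ (e l - q l))"
  by (simp add: tm_def norm_mult prod_norm[symmetric] norm_power)

lemma pser_Tq: "pser a r = Tq a r (\<lambda>_. 0)"
  by (auto simp: pser_def Tq_def tm_def)

lemma tm_summable:
  assumes conv: "\<And>z. z \<in> polyd r R \<Longrightarrow> (\<lambda>e. a e * (\<Prod>l<r. z l ^ e l)) summable_on midx r"
    and z: "z \<in> polyd r R"
  shows "(\<lambda>e. norm (tm a r q z e)) summable_on midx r"
proof -
  have ex: "\<exists>\<rho>. cmod (z l) < \<rho> \<and> ereal \<rho> < R l" if "l < r" for l
  proof -
    have "ereal (cmod (z l)) < R l" using z that unfolding polyd_def by auto
    from ereal_dense2[OF this] obtain w where "ereal (cmod (z l)) < ereal w" "ereal w < R l" by blast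
    thus ?thesis by auto
  qed
  have "\<forall>l. \<exists>\<rho>. l < r \<longrightarrow> cmod (z l) < \<rho> \<and> ereal \<rho> < R l"
    using ex by blast
  then obtain \<rho> where \<rho>: "\<And>l. l < r \<Longrightarrow> cmod (z l) < \<rho> l \<and> ereal (\<rho> l) < R l" by metis
  have "\<forall>l. \<exists>C. l < r \<longrightarrow> C \<ge> 0 \<and> (\<forall>n. real (ff n (q l)) * cmod (z l) ^ (n - q l) \<le> C * \<rho> l ^ n)"
    using ff_bound \<rho> by (metis norm_ge_zero)
  then obtain C where C: "\<And>l. l < r \<Longrightarrow> C l \<ge> 0 \<and> (\<forall>n. real (ff n (q l)) * cmod (z l) ^ (n - q l) \<le> C l * \<rho> l ^ n)"
    by metis
  have rpos: "\<rho> l > 0" if "l < r" for l using \<rho>[OF that] by (meson norm_ge_zero order_le_less_trans)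
  define z' where "z' = (\<lambda>l. complex_of_real (\<rho> l))"
  have "z' \<in> polyd r R" unfolding polyd_def z'_def using \<rho> rpos by (auto simp: abs_of_pos)
  from conv[OF this] have "(\<lambda>e. norm (a e * (\<Prod>l<r. z' l ^ e l))) summable_on midx r"
    by (simp add: summable_on_iff_abs_summable_on_complex)
  moreover have "norm (a e * (\<Prod>l<r. z' l ^ e l)) = norm (a e) * (\<Prod>l<r. \<rho> l ^ e l)" for e
    using rpos by (simp add: z'_def norm_mult prod_norm[symmetric] norm_power abs_of_pos)
  ultimately have s1: "(\<lambda>e. norm (a e) * (\<Prod>l<r. \<rho> l ^ e l)) summable_on midx r" by simp
  have s2: "(\<lambda>e. (\<Prod>l<r. C l) * (norm (a e) * (\<Prod>l<r. \<rho> l ^ e l))) summable_on midx r"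
    by (rule summable_on_cmult_right[OF s1])
  show ?thesis
  proof (rule summable_on_comparison_test[OF s2])
    fix e
    have "(\<Prod>l<r. real (ff (e l) (q l)) * cmod (z l) ^ (e l - q l)) \<le> (\<Prod>l<r. C l * \<rho> l ^ e l)"
      by (rule prod_mono) (use C in auto)
    also have "\<dots> = (\<Prod>l<r. C l) * (\<Prod>l<r. \<rho> l ^ e l)" by (rule prod.distrib)
    finally show "norm (tm a r q z e) \<le> (\<Prod>l<r. C l) * (norm (a e) * (\<Prod>l<r. \<rho> l ^ e l))"
      unfolding tm_norm by (simp add: mult_left_mono mult.left_commute)
  qed auto
qed

lemma midx_enum:
  assumes r: "r \<ge> 1"
  obtains g where "bij_betw g (UNIV::nat set) (midx r)"
proof -
  define f where "f = (\<lambda>xs::nat list. \<lambda>l. if l < length xs then xs ! l else 0)"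
  have "midx r \<subseteq> f ` UNIV"
  proof
    fix e assume e: "e \<in> midx r"
    have "e = f (map e [0..<r])"
      using e by (auto simp: f_def midx_def fun_eq_iff)
    thus "e \<in> f ` UNIV" by blast
  qed
  hence cnt: "countable (midx r)" by (rule countable_subset) auto
  define h where "h = (\<lambda>n::nat. \<lambda>l::nat. if l = 0 then n else (0::nat))"
  have "inj h" by (auto simp: inj_def h_def fun_eq_iff split: if_splits)
  hence "infinite (range h)" by (rule range_inj_infinite)
  moreover have "range h \<subseteq> midx r" using r by (auto simp: h_def midx_def)
  ultimately have inf: "infinite (midx r)" by (meson infinite_super)
  from countableE_infinite[OF cnt inf] obtain e where "bij_betw e (midx r) (UNIV::nat set)" by blast
  hence "bij_betw (inv_into (midx r) e) UNIV (midx r)" by (rule bij_betw_inv_into)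
  thus ?thesis by (rule that)
qed

lemma infsum_as_suminf:
  fixes f :: "_ \<Rightarrow> complex"
  assumes g: "bij_betw g UNIV A" and s: "(\<lambda>x. norm (f x)) summable_on A"
  shows "infsum f A = (\<Sum>n. f (g n))" "summable (\<lambda>n. norm (f (g n)))"
proof -
  have "(\<lambda>n. norm (f (g n))) summable_on UNIV"
    using summable_on_reindex_bij_betw[OF g, of "\<lambda>x. norm (f x)"] s by simp
  thus sn: "summable (\<lambda>n. norm (f (g n)))" using summable_on_UNIV_nonneg_real_iff by auto
  have "(\<lambda>n. f (g n)) sums (\<Sum>n. f (g n))" by (rule summable_sums[OF summable_norm_cancel[OF sn]])
  hence "((\<lambda>n. f (g n)) has_sum (\<Sum>n. f (g n))) UNIV" by (rule norm_summable_imp_has_sum[OF sn])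
  hence "infsum (\<lambda>n. f (g n)) UNIV = (\<Sum>n. f (g n))" by (rule infsumI)
  thus "infsum f A = (\<Sum>n. f (g n))" using infsum_reindex_bij_betw[OF g, of f] by simp
qed

lemma tm_deriv:
  assumes l: "l < r"
  shows "((\<lambda>w. tm a r q (z(l:=w)) e) has_field_derivative tm a r (q(l := Suc (q l))) (z(l:=w0)) e) (at w0 within S)"
proof -
  define c where "c = (of_nat (ff (e l) (q l)) :: complex)"
  define n where "n = e l - q l"
  define Rst where "Rst = (\<Prod>j\<in>{..<r} - {l}. of_nat (ff (e j) (q j)) * z j ^ (e j - q j) :: complex)"
  have lin: "l \<in> {..<r}" using l by auto
  have feq: "tm a r q (z(l:=w)) e = a e * (c * w ^ n) * Rst" for w
  proof -
    have "(\<Prod>j<r. of_nat (ff (e j) (q j)) * (z(l:=w)) j ^ (e j - q j))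
      = (of_nat (ff (e l) (q l)) * (z(l:=w)) l ^ (e l - q l)) * (\<Prod>j\<in>{..<r} - {l}. of_nat (ff (e j) (q j)) * (z(l:=w)) j ^ (e j - q j))"
      by (rule prod.remove[OF _ lin]) auto
    also have "(\<Prod>j\<in>{..<r} - {l}. of_nat (ff (e j) (q j)) * (z(l:=w)) j ^ (e j - q j)) = Rst"
      unfolding Rst_def by (rule prod.cong) auto
    finally show ?thesis by (simp add: tm_def c_def n_def mult.assoc)
  qed
  have veq: "tm a r (q(l := Suc (q l))) (z(l:=w0)) e = a e * (c * (of_nat n * (1 * w0 ^ (n - Suc 0)))) * Rst"
  proof -
    have "(\<Prod>j<r. of_nat (ff (e j) ((q(l := Suc (q l))) j)) * (z(l:=w0)) j ^ (e j - (q(l := Suc (q l))) j))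
      = (of_nat (ff (e l) (Suc (q l))) * w0 ^ (e l - Suc (q l))) * (\<Prod>j\<in>{..<r} - {l}. of_nat (ff (e j) ((q(l := Suc (q l))) j)) * (z(l:=w0)) j ^ (e j - (q(l := Suc (q l))) j))"
      by (subst prod.remove[OF _ lin]) auto
    also have "(\<Prod>j\<in>{..<r} - {l}. of_nat (ff (e j) ((q(l := Suc (q l))) j)) * (z(l:=w0)) j ^ (e j - (q(l := Suc (q l))) j)) = Rst"
      unfolding Rst_def by (rule prod.cong) auto
    also have "of_nat (ff (e l) (Suc (q l))) * w0 ^ (e l - Suc (q l)) = c * (of_nat n * (1 * w0 ^ (n - Suc 0)))"
      by (simp add: c_def n_def)
    finally show ?thesis by (simp add: tm_def mult.assoc)
  qed
  have d: "((\<lambda>w. a e * (c * w ^ n) * Rst) has_field_derivative a e * (c * (of_nat n * (1 * w0 ^ (n - Suc 0)))) * Rst) (at w0 within S)"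
    by (intro DERIV_cmult_right DERIV_cmult DERIV_power DERIV_ident)
  show ?thesis unfolding feq veq by (rule d)
qed

lemma ball_polyd:
  assumes z: "z \<in> polyd r R" and l: "l < r"
  obtains s where "cmod (z l) < s" "ereal s < R l"
    "\<And>w. w \<in> ball (z l) (s - cmod (z l)) \<Longrightarrow> cmod w < s \<and> z(l := w) \<in> polyd r R"
proof -
  have "ereal (cmod (z l)) < R l" using z l unfolding polyd_def by auto
  from ereal_dense2[OF this] obtain s where s: "ereal (cmod (z l)) < ereal s" "ereal s < R l" by blast
  have "cmod w < s \<and> z(l := w) \<in> polyd r R" if w: "w \<in> ball (z l) (s - cmod (z l))" for w
  proof -
    have "cmod w \<le> cmod (z l) + cmod (w - z l)" by (metis add.commute diff_add_cancel norm_triangle_ineq)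
    also have "cmod (w - z l) < s - cmod (z l)" using w by (simp add: dist_norm norm_minus_commute)
    finally have ws: "cmod w < s" by simp
    hence "ereal (cmod w) < ereal s" by simp
    hence "ereal (cmod w) < R l" using s(2) by (rule order.strict_trans)
    thus ?thesis using ws z unfolding polyd_def by auto
  qed
  thus ?thesis using that s by auto
qed

lemma Tq_deriv:
  assumes r: "r \<ge> 1"
    and conv: "\<And>z. z \<in> polyd r R \<Longrightarrow> (\<lambda>e. a e * (\<Prod>l<r. z l ^ e l)) summable_on midx r"
    and z: "z \<in> polyd r R" and l: "l < r"
  shows "((\<lambda>w. Tq a r q (z(l:=w))) has_field_derivative Tq a r (q(l := Suc (q l))) z) (at (z l))"
proof -
  obtain s where s: "cmod (z l) < s" "ereal s < R l"
    and B: "\<And>w. w \<in> ball (z l) (s - cmod (z l)) \<Longrightarrow> cmod w < s \<and> z(l := w) \<in> polyd r R"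
    using ball_polyd[OF z l] by blast
  define S where "S = ball (z l) (s - cmod (z l))"
  have zlS: "z l \<in> S" using s unfolding S_def by auto
  have spos: "s > 0" using s(1) by (meson norm_ge_zero order_le_less_trans)
  define zs where "zs = z(l := complex_of_real s)"
  have zs: "zs \<in> polyd r R" using z s spos unfolding polyd_def zs_def by auto
  obtain g where g: "bij_betw g (UNIV::nat set) (midx r)" using midx_enum[OF r] by blast
  define q' where "q' = q(l := Suc (q l))"
  define f where "f = (\<lambda>n w. tm a r q (z(l:=w)) (g n))"
  define f' where "f' = (\<lambda>n w. tm a r q' (z(l:=w)) (g n))"
  have bnd: "norm (f' n w) \<le> norm (tm a r q' zs (g n))" if w: "w \<in> S" for n w
  proof -
    have ws: "cmod w \<le> s" using B[of w] w unfolding S_def by auto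
    have "(\<Prod>j<r. real (ff (g n j) (q' j)) * cmod ((z(l:=w)) j) ^ (g n j - q' j))
       \<le> (\<Prod>j<r. real (ff (g n j) (q' j)) * cmod (zs j) ^ (g n j - q' j))"
    proof (rule prod_mono)
      fix j assume "j \<in> {..<r}"
      show "0 \<le> real (ff (g n j) (q' j)) * cmod ((z(l:=w)) j) ^ (g n j - q' j) \<and>
        real (ff (g n j) (q' j)) * cmod ((z(l:=w)) j) ^ (g n j - q' j) \<le> real (ff (g n j) (q' j)) * cmod (zs j) ^ (g n j - q' j)"
      proof (cases "j = l")
        case True
        have "cmod w ^ (g n j - q' j) \<le> s ^ (g n j - q' j)" by (rule power_mono[OF ws]) auto
        thus ?thesis using True spos by (auto simp: zs_def intro!: mult_left_mono)
      next
        case False thus ?thesis by (simp add: zs_def)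
      qed
    qed
    thus ?thesis unfolding f'_def tm_norm by (intro mult_left_mono) auto
  qed
  have sumM: "summable (\<lambda>n. norm (tm a r q' zs (g n)))"
    by (rule infsum_as_suminf(2)[OF g tm_summable[OF conv zs]])
  have d: "((\<lambda>x. \<Sum>n. f n x) has_field_derivative (\<Sum>n. f' n (z l))) (at (z l))"
  proof (rule has_field_derivative_series'(2)[of S f f' "z l"])
    show "convex S" unfolding S_def by simp
    show "(f n has_field_derivative f' n x) (at x within S)" if "x \<in> S" for n x
      unfolding f_def f'_def q'_def by (rule tm_deriv[OF l])
    show "uniformly_convergent_on S (\<lambda>n x. \<Sum>i<n. f' i x)"
      by (rule Weierstrass_m_test'[OF bnd sumM])
    show "z l \<in> S" by (rule zlS)
    have "summable (\<lambda>n. norm (tm a r q z (g n)))"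
      by (rule infsum_as_suminf(2)[OF g tm_summable[OF conv z]])
    thus "summable (\<lambda>n. f n (z l))" unfolding f_def using summable_norm_cancel by simp
    show "z l \<in> interior S" using zlS unfolding S_def by simp
  qed
  have e1: "(\<Sum>n. f' n (z l)) = Tq a r q' z"
    unfolding f'_def Tq_def using infsum_as_suminf(1)[OF g tm_summable[OF conv z]] by simp
  have e2: "(\<Sum>n. f n x) = Tq a r q (z(l:=x))" if "x \<in> S" for x
  proof -
    have "z(l:=x) \<in> polyd r R" using B[of x] that unfolding S_def by auto
    thus ?thesis unfolding f_def Tq_def using infsum_as_suminf(1)[OF g tm_summable[OF conv]] by simp
  qed
  show ?thesis unfolding q'_def[symmetric] e1[symmetric]
    by (rule has_field_derivative_transform_within_open[OF d _ zlS e2]) (simp add: S_def)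
qed

lemma pdiff_Tq:
  assumes r: "r \<ge> 1"
    and conv: "\<And>z. z \<in> polyd r R \<Longrightarrow> (\<lambda>e. a e * (\<Prod>l<r. z l ^ e l)) summable_on midx r"
    and h: "\<And>z. z \<in> polyd r R \<Longrightarrow> h z = Tq a r q z"
    and z: "z \<in> polyd r R" and l: "l < r"
  shows "pdiff l h z = Tq a r (q(l := Suc (q l))) z"
proof -
  obtain s where s: "cmod (z l) < s" "ereal s < R l"
    and B: "\<And>w. w \<in> ball (z l) (s - cmod (z l)) \<Longrightarrow> cmod w < s \<and> z(l := w) \<in> polyd r R"
    using ball_polyd[OF z l] by blast
  have ev: "eventually (\<lambda>w. h (z(l:=w)) = Tq a r q (z(l:=w))) (nhds (z l))"
  proof -
    have "eventually (\<lambda>w. w \<in> ball (z l) (s - cmod (z l))) (nhds (z l))"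
      by (rule eventually_nhds_in_open) (use s in auto)
    thus ?thesis by (rule eventually_mono) (use B h in auto)
  qed
  have "pdiff l h z = deriv (\<lambda>w. Tq a r q (z(l:=w))) (z l)"
    unfolding pdiff_def by (rule deriv_cong_ev[OF ev refl])
  also have "\<dots> = Tq a r (q(l := Suc (q l))) z"
    by (rule DERIV_imp_deriv[OF Tq_deriv[OF r conv z l]])
  finally show ?thesis .
qed

lemma pdiffn_Tq:
  assumes r: "r \<ge> 1"
    and conv: "\<And>z. z \<in> polyd r R \<Longrightarrow> (\<lambda>e. a e * (\<Prod>l<r. z l ^ e l)) summable_on midx r"
    and h: "\<And>z. z \<in> polyd r R \<Longrightarrow> h z = Tq a r q z"
    and l: "l < r"
  shows "z \<in> polyd r R \<Longrightarrow> pdiffn l n h z = Tq a r (q(l := q l + n)) z"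
proof (induct n arbitrary: z)
  case 0 thus ?case using h by (simp add: pdiffn_def)
next
  case (Suc n)
  have "pdiffn l (Suc n) h z = pdiff l (pdiffn l n h) z" by (simp add: pdiffn_def)
  also have "\<dots> = Tq a r ((q(l := q l + n))(l := Suc ((q(l := q l + n)) l))) z"
    by (rule pdiff_Tq[OF r conv Suc.hyps Suc.prems l])
  also have "(q(l := q l + n))(l := Suc ((q(l := q l + n)) l)) = q(l := q l + Suc n)" by simp
  finally show ?case .
qed

lemma foldr_Tq:
  assumes r: "r \<ge> 1"
    and conv: "\<And>z. z \<in> polyd r R \<Longrightarrow> (\<lambda>e. a e * (\<Prod>l<r. z l ^ e l)) summable_on midx r"
    and L: "distinct L" "set L \<subseteq> {..<r}"
  shows "z \<in> polyd r R \<Longrightarrow> foldr (\<lambda>l h. pdiffn l (qq l) h) L (Tq a r q0) z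
    = Tq a r (\<lambda>j. if j \<in> set L then q0 j + qq j else q0 j) z"
  using L
proof (induct L arbitrary: z)
  case Nil thus ?case by simp
next
  case (Cons x L)
  define q1 where "q1 = (\<lambda>j. if j \<in> set L then q0 j + qq j else q0 j)"
  have IH: "\<And>z. z \<in> polyd r R \<Longrightarrow> foldr (\<lambda>l h. pdiffn l (qq l) h) L (Tq a r q0) z = Tq a r q1 z"
    using Cons unfolding q1_def by auto
  have "foldr (\<lambda>l h. pdiffn l (qq l) h) (x # L) (Tq a r q0) z
    = pdiffn x (qq x) (foldr (\<lambda>l h. pdiffn l (qq l) h) L (Tq a r q0)) z" by simp
  also have "\<dots> = Tq a r (q1(x := q1 x + qq x)) z"
    by (rule pdiffn_Tq[OF r conv IH _ Cons.prems(1)]) (use Cons.prems in auto)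
  also have "q1(x := q1 x + qq x) = (\<lambda>j. if j \<in> set (x # L) then q0 j + qq j else q0 j)"
    using Cons.prems unfolding q1_def by (auto simp: fun_eq_iff)
  finally show ?case .
qed

lemma mixed_deriv_Tq:
  assumes r: "r \<ge> 1"
    and conv: "\<And>z. z \<in> polyd r R \<Longrightarrow> (\<lambda>e. a e * (\<Prod>l<r. z l ^ e l)) summable_on midx r"
    and z: "z \<in> polyd r R" and qq: "\<And>j. j \<ge> r \<Longrightarrow> qq j = 0"
  shows "mixed_deriv r qq (pser a r) z = Tq a r qq z"
proof -
  have "mixed_deriv r qq (pser a r) z = Tq a r (\<lambda>j. if j \<in> set [0..<r] then 0 + qq j else 0) z"
    unfolding mixed_deriv_def pser_Tq by (rule foldr_Tq[OF r conv _ _ z]) auto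
  also have "(\<lambda>j. if j \<in> set [0..<r] then 0 + qq j else 0) = qq"
    using qq by (auto simp: fun_eq_iff)
  finally show ?thesis .
qed

lemma coeff_has_sum:
  assumes r: "r \<ge> 1"
    and conv: "\<And>z. z \<in> polyd r R \<Longrightarrow> (\<lambda>e. a e * (\<Prod>l<r. z l ^ e l)) summable_on midx r"
    and z: "z \<in> polyd r R" and qq: "\<And>j. j \<ge> r \<Longrightarrow> qq j = 0"
  shows "((\<lambda>e. a e * (\<Prod>l<r. of_nat (e l choose qq l) * z l ^ (e l - qq l))) has_sum
     (mixed_deriv r qq (pser a r) z / (\<Prod>l<r. of_nat (fact (qq l))))) (midx r)"
proof -
  define P where "P = (\<Prod>l<r. of_nat (fact (qq l)) :: complex)"
  have P: "P \<noteq> 0" unfolding P_def by (simp add: prod_zero_iff)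
  have "(\<lambda>e. norm (tm a r qq z e)) summable_on midx r" by (rule tm_summable[OF conv z])
  hence "(tm a r qq z) summable_on midx r" by (rule abs_summable_summable)
  hence "(tm a r qq z has_sum Tq a r qq z) (midx r)" unfolding Tq_def by (rule has_sum_infsum)
  hence "((\<lambda>e. tm a r qq z e / P) has_sum (Tq a r qq z / P)) (midx r)" by (rule has_sum_divide_const)
  moreover have "tm a r qq z e / P = a e * (\<Prod>l<r. of_nat (e l choose qq l) * z l ^ (e l - qq l))" for e
  proof -
    have "tm a r qq z e = P * (a e * (\<Prod>l<r. of_nat (e l choose qq l) * z l ^ (e l - qq l)))"
      unfolding tm_def P_def ff_choose by (simp add: prod.distrib[symmetric] algebra_simps)
    thus ?thesis using P by simp
  qed
  ultimately have "((\<lambda>e. a e * (\<Prod>l<r. of_nat (e l choose qq l) * z l ^ (e l - qq l))) has_sum (Tq a r qq z / P)) (midx r)"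
    by simp
  moreover have "mixed_deriv r qq (pser a r) z = Tq a r qq z" by (rule mixed_deriv_Tq[OF r conv z qq])
  ultimately show ?thesis unfolding P_def by simp
qed

lemma has_sum_finite_sum:
  fixes f :: "'i \<Rightarrow> 'a \<Rightarrow> complex"
  assumes "finite I" "\<And>i. i \<in> I \<Longrightarrow> (f i has_sum s i) A"
  shows "((\<lambda>x. \<Sum>i\<in>I. f i x) has_sum (\<Sum>i\<in>I. s i)) A"
  using assms
proof (induct I rule: finite_induct)
  case empty thus ?case by simp
next
  case (insert j I)
  have "((\<lambda>x. f j x + (\<Sum>i\<in>I. f i x)) has_sum (s j + (\<Sum>i\<in>I. s i))) A"
    by (rule has_sum_add) (use insert in auto)
  thus ?case using insert by simp
qed

theorem mainTheorem11:
  fixes r m :: nat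
    and a :: "(nat \<Rightarrow> nat) \<Rightarrow> complex"
    and R :: "nat \<Rightarrow> ereal"
    and X U Uinv :: "nat \<Rightarrow> complex mat"
    and K :: "nat \<Rightarrow> nat"
    and lam :: "nat \<Rightarrow> nat \<Rightarrow> complex"
    and alpha :: "nat \<Rightarrow> nat \<Rightarrow> nat"
    and msz :: "nat \<Rightarrow> nat \<Rightarrow> nat \<Rightarrow> nat"
  defines "Q \<equiv> \<lambda>l k i q. if q = 0 then U l * blk_id (K l) (alpha l) (msz l) k i * Uinv l
                     else (U l * blk_nil (K l) (alpha l) (msz l) k i * Uinv l) ^\<^sub>m q"
  assumes r: "r \<ge> 1"
    and conv: "\<And>z. (\<forall>l<r. ereal (cmod (z l)) < R l) \<Longrightarrow>
                 (\<lambda>e. a e * (\<Prod>l<r. z l ^ e l)) summable_on midx r"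
    and U: "\<And>l. l < r \<Longrightarrow> U l \<in> carrier_mat m m \<and> Uinv l \<in> carrier_mat m m
                 \<and> U l * Uinv l = 1\<^sub>m m \<and> Uinv l * U l = 1\<^sub>m m"
    and dims: "\<And>l. l < r \<Longrightarrow> (\<Sum>k<K l. \<Sum>i<alpha l k. msz l k i) = m"
    and distinct: "\<And>l. l < r \<Longrightarrow> inj_on (lam l) {..<K l}"
    and geo: "\<And>l k. l < r \<Longrightarrow> k < K l \<Longrightarrow> alpha l k \<ge> 1"
    and sizes: "\<And>l k i. l < r \<Longrightarrow> k < K l \<Longrightarrow> i < alpha l k \<Longrightarrow> msz l k i \<ge> 1"
    and eig: "\<And>l k. l < r \<Longrightarrow> k < K l \<Longrightarrow> ereal (cmod (lam l k)) < R l"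
    and X: "\<And>l. l < r \<Longrightarrow> X l = U l * jordan_form (K l) (lam l) (alpha l) (msz l) * Uinv l"
  shows "\<forall>p<m. \<forall>s<m.
    ((\<lambda>e. (a e \<cdot>\<^sub>m ord_prod m r (\<lambda>l. X l ^\<^sub>m e l)) $$ (p, s)) has_sum
      (\<Sum>(k, i, q) \<in> {(k, i, q). (\<forall>l<r. k l < K l \<and> i l < alpha l (k l) \<and> q l < msz l (k l) (i l))
                                 \<and> (\<forall>l\<ge>r. k l = 0 \<and> i l = 0 \<and> q l = 0)}.
         (mixed_deriv r q (pser a r) (\<lambda>l. lam l (k l)) / (\<Prod>l<r. of_nat (fact (q l))))
         * ord_prod m r (\<lambda>l. Q l (k l) (i l) (q l)) $$ (p, s)))
    (midx r)"
proof (intro allI impI)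
  fix p s assume p: "p < m" and s: "s < m"
  have conv': "\<And>z. z \<in> polyd r R \<Longrightarrow> (\<lambda>e. a e * (\<Prod>l<r. z l ^ e l)) summable_on midx r"
    using conv unfolding polyd_def by auto
  define T where "T = (\<lambda>l. {(k,i,q). k < K l \<and> i < alpha l k \<and> q < msz l k i})"
  define cc where "cc = (\<lambda>l n (t::nat \<times> nat \<times> nat). of_nat (n choose snd (snd t)) * lam l (fst t) ^ (n - snd (snd t)) :: complex)"
  define Qt where "Qt = (\<lambda>l. QQ (U l) (Uinv l) (K l) (alpha l) (msz l))"
  define L where "L = [0..<r]"
  have setL: "set L = {..<r}" unfolding L_def by auto
  define F where "F = (\<lambda>\<tau>. foldr (\<lambda>l M. Qt l (\<tau> l) * M) L (1\<^sub>m m))"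
  have finT: "finite (T l)" for l
  proof -
    have "T l \<subseteq> {..<K l} \<times> {..<Max (insert 0 (alpha l ` {..<K l}))} \<times> {..<Max (insert 0 ((\<lambda>(k,i). msz l k i) ` ({..<K l} \<times> {..<Max (insert 0 (alpha l ` {..<K l}))})))}"
    proof
      fix t assume "t \<in> T l"
      then obtain k i q where t: "t = (k,i,q)" "k < K l" "i < alpha l k" "q < msz l k i" unfolding T_def by auto
      have i: "i < Max (insert 0 (alpha l ` {..<K l}))"
        using t by (intro order.strict_trans2[OF t(3)] Max_ge) auto
      have "q < Max (insert 0 ((\<lambda>(k,i). msz l k i) ` ({..<K l} \<times> {..<Max (insert 0 (alpha l ` {..<K l}))})))"
        using t i by (intro order.strict_trans2[OF t(4)] Max_ge) auto
      thus "t \<in> {..<K l} \<times> {..<Max (insert 0 (alpha l ` {..<K l}))} \<times> {..<Max (insert 0 ((\<lambda>(k,i). msz l k i) ` ({..<K l} \<times> {..<Max (insert 0 (alpha l ` {..<K l}))})))}"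
        using t i by auto
    qed
    thus ?thesis by (rule finite_subset) auto
  qed
  have carQ: "Qt l t \<in> carrier_mat m m" if "l < r" for l t
  proof -
    have "block_layout (K l) (alpha l) (msz l) B \<in> carrier_mat m m"
      if "\<And>k i. B k i \<in> carrier_mat (msz l k i) (msz l k i)" for B
      unfolding block_layout_blist dims[OF \<open>l < r\<close>, symmetric] sum_blist[symmetric]
      by (rule dim_diag_block_sz) (use that in auto)
    hence "blk_id (K l) (alpha l) (msz l) (fst t) (fst (snd t)) \<in> carrier_mat m m"
      "blk_nil (K l) (alpha l) (msz l) (fst t) (fst (snd t)) \<in> carrier_mat m m"
      unfolding blk_id_def blk_nil_def by auto
    thus ?thesis using U[OF that] unfolding Qt_def QQ_def by (cases t) auto
  qed
  have Xe: "X l ^\<^sub>m n = Matrix.mat m m (\<lambda>ps. \<Sum>t\<in>T l. cc l n t * Qt l t $$ ps)" if "l < r" for l n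
    unfolding T_def cc_def Qt_def
    by (rule Xpow_expand[where lam="lam l"]) (use U[OF that] dims[OF that] X[OF that] in auto)
  have tfin: "finite (tup L T (0,0,0))" by (rule finite_tup) (use finT in auto)
  have entry: "(a e \<cdot>\<^sub>m ord_prod m r (\<lambda>l. X l ^\<^sub>m e l)) $$ (p, s)
     = (\<Sum>\<tau>\<in>tup L T (0,0,0). (a e * (\<Prod>l\<in>set L. cc l (e l) (\<tau> l))) * F \<tau> $$ (p,s))" for e
  proof -
    have "ord_prod m r (\<lambda>l. X l ^\<^sub>m e l) = foldr (\<lambda>l M. Matrix.mat m m (\<lambda>ps. \<Sum>t\<in>T l. cc l (e l) t * Qt l t $$ ps) * M) L (1\<^sub>m m)"
      unfolding ord_prod_def L_def[symmetric] by (rule foldr_cong) (auto simp: Xe L_def)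
    also have "\<dots> = Matrix.mat m m (\<lambda>ps. \<Sum>\<tau>\<in>tup L T (0,0,0). (\<Prod>l\<in>set L. cc l (e l) (\<tau> l)) * F \<tau> $$ ps)"
      unfolding F_def by (rule ord_prod_expand) (use finT carQ in \<open>auto simp: L_def\<close>)
    finally show ?thesis using p s by (simp add: sum_distrib_left mult.assoc)
  qed
  define G where "G = (\<lambda>\<tau>::nat \<Rightarrow> nat \<times> nat \<times> nat. mixed_deriv r (\<lambda>l. snd (snd (\<tau> l))) (pser a r) (\<lambda>l. lam l (fst (\<tau> l)))
     / (\<Prod>l<r. of_nat (fact (snd (snd (\<tau> l))))))"
  have hs: "((\<lambda>e. (a e * (\<Prod>l\<in>set L. cc l (e l) (\<tau> l))) * F \<tau> $$ (p,s)) has_sum (G \<tau> * F \<tau> $$ (p,s))) (midx r)"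
    if \<tau>: "\<tau> \<in> tup L T (0,0,0)" for \<tau>
  proof -
    have zin: "(\<lambda>l. lam l (fst (\<tau> l))) \<in> polyd r R"
      using \<tau> eig unfolding polyd_def tup_def T_def setL by fastforce
    have qq0: "snd (snd (\<tau> j)) = 0" if "j \<ge> r" for j using \<tau> that unfolding tup_def setL by auto
    have "((\<lambda>e. a e * (\<Prod>l<r. of_nat (e l choose snd (snd (\<tau> l))) * (\<lambda>l. lam l (fst (\<tau> l))) l ^ (e l - snd (snd (\<tau> l))))) has_sum G \<tau>) (midx r)"
      unfolding G_def by (rule coeff_has_sum[OF r conv' zin qq0])
    hence "((\<lambda>e. a e * (\<Prod>l\<in>set L. cc l (e l) (\<tau> l))) has_sum G \<tau>) (midx r)"
      unfolding setL cc_def by simp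
    thus ?thesis by (rule has_sum_cmult_left)
  qed
  have main: "((\<lambda>e. (a e \<cdot>\<^sub>m ord_prod m r (\<lambda>l. X l ^\<^sub>m e l)) $$ (p, s)) has_sum
      (\<Sum>\<tau>\<in>tup L T (0,0,0). G \<tau> * F \<tau> $$ (p,s))) (midx r)"
    unfolding entry by (rule has_sum_finite_sum[OF tfin hs])
  have eqsum: "(\<Sum>\<tau>\<in>tup L T (0,0,0). G \<tau> * F \<tau> $$ (p,s)) =
      (\<Sum>(k, i, q) \<in> {(k, i, q). (\<forall>l<r. k l < K l \<and> i l < alpha l (k l) \<and> q l < msz l (k l) (i l))
                                 \<and> (\<forall>l\<ge>r. k l = 0 \<and> i l = 0 \<and> q l = 0)}.
         (mixed_deriv r q (pser a r) (\<lambda>l. lam l (k l)) / (\<Prod>l<r. of_nat (fact (q l))))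
         * ord_prod m r (\<lambda>l. Q l (k l) (i l) (q l)) $$ (p, s))"
  proof (rule sum.reindex_bij_witness[of _ "\<lambda>(k,i,q). \<lambda>l. (k l, i l, q l)" "\<lambda>\<tau>. (\<lambda>l. fst (\<tau> l), \<lambda>l. fst (snd (\<tau> l)), \<lambda>l. snd (snd (\<tau> l)))"])
    fix \<tau> assume \<tau>: "\<tau> \<in> tup L T (0,0,0)"
    show "(case (\<lambda>l. fst (\<tau> l), \<lambda>l. fst (snd (\<tau> l)), \<lambda>l. snd (snd (\<tau> l))) of (k, i, q) \<Rightarrow> \<lambda>l. (k l, i l, q l)) = \<tau>"
      by simp
    show "(\<lambda>l. fst (\<tau> l), \<lambda>l. fst (snd (\<tau> l)), \<lambda>l. snd (snd (\<tau> l))) \<in> {(k, i, q). (\<forall>l<r. k l < K l \<and> i l < alpha l (k l) \<and> q l < msz l (k l) (i l))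
                                 \<and> (\<forall>l\<ge>r. k l = 0 \<and> i l = 0 \<and> q l = 0)}"
    proof -
      have A: "fst (\<tau> l) < K l \<and> fst (snd (\<tau> l)) < alpha l (fst (\<tau> l)) \<and> snd (snd (\<tau> l)) < msz l (fst (\<tau> l)) (fst (snd (\<tau> l)))"
        if "l < r" for l
      proof -
        have "\<tau> l \<in> T l" using \<tau> that unfolding tup_def setL by auto
        thus ?thesis unfolding T_def by (cases "\<tau> l") auto
      qed
      have B: "\<tau> l = (0,0,0)" if "l \<ge> r" for l using \<tau> that unfolding tup_def setL by auto
      show ?thesis using A B by auto
    qed
    have Fe: "F \<tau> = ord_prod m r (\<lambda>l. Q l (fst (\<tau> l)) (fst (snd (\<tau> l))) (snd (snd (\<tau> l))))"
      unfolding F_def ord_prod_def L_def Qt_def Q_def QQ_def by (intro foldr_cong) (auto split: prod.splits)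
    show "(case (\<lambda>l. fst (\<tau> l), \<lambda>l. fst (snd (\<tau> l)), \<lambda>l. snd (snd (\<tau> l))) of (k, i, q) \<Rightarrow>
        mixed_deriv r q (pser a r) (\<lambda>l. lam l (k l)) / (\<Prod>l<r. of_nat (fact (q l))) * ord_prod m r (\<lambda>l. Q l (k l) (i l) (q l)) $$ (p, s))
       = G \<tau> * F \<tau> $$ (p, s)"
      unfolding Fe G_def by simp
  next
    fix t assume t: "t \<in> {(k, i, q). (\<forall>l<r. k l < K l \<and> i l < alpha l (k l) \<and> q l < msz l (k l) (i l))
                                 \<and> (\<forall>l\<ge>r. k l = 0 \<and> i l = 0 \<and> q l = 0)}"
    then obtain k i q where t': "t = (k,i,q)" by (metis prod.collapse)
    show "(\<lambda>\<tau>. (\<lambda>l. fst (\<tau> l), \<lambda>l. fst (snd (\<tau> l)), \<lambda>l. snd (snd (\<tau> l)))) ((\<lambda>(k,i,q). \<lambda>l. (k l, i l, q l)) t) = t"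
      unfolding t' by simp
    show "(\<lambda>(k,i,q). \<lambda>l. (k l, i l, q l)) t \<in> tup L T (0,0,0)"
      using t unfolding t' tup_def setL T_def by auto
  qed
  show "((\<lambda>e. (a e \<cdot>\<^sub>m ord_prod m r (\<lambda>l. X l ^\<^sub>m e l)) $$ (p, s)) has_sum
      (\<Sum>(k, i, q) \<in> {(k, i, q). (\<forall>l<r. k l < K l \<and> i l < alpha l (k l) \<and> q l < msz l (k l) (i l))
                                 \<and> (\<forall>l\<ge>r. k l = 0 \<and> i l = 0 \<and> q l = 0)}.
         (mixed_deriv r q (pser a r) (\<lambda>l. lam l (k l)) / (\<Prod>l<r. of_nat (fact (q l))))
         * ord_prod m r (\<lambda>l. Q l (k l) (i l) (q l)) $$ (p, s)))
    (midx r)"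
    using main unfolding eqsum .
qed

end
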